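(* Let $\Pi=(\iota,\tau,\beta)$ be a safety problem. If $\Pi$ has a proof in the incremental forward proof system $\mathbf{FI}$, then $\Pi$ is safe.
   Context: A first-order vocabulary $\Sigma$ consists of constant, function and relation symbols; $\Sigma'=\{a' : a\in\Sigma\}$ is a disjoint copy of it, and for a formula $\varphi$ over $\Sigma$, $\varphi'$ denotes $\varphi$ with every symbol of $\Sigma$ replaced by its primed copy. A state is a first-order structure over $\Sigma$. A safety problem is a triple $(\iota,\tau,\beta)$, where $\iota$ (initial states) and $\beta$ (bad states) are closed formulas over $\Sigma$ and $\tau$ (transitions) is a closed formula over $\Sigma\uplus\Sigma'$. A pair of states $(s,t)$ over a common domain is a transition if the structure over $\Sigma\uplus\Sigma'$ interpreting $\Sigma$ as in $s$ and $\Sigma'$ as in $t$ satisfies $\tau$. A trace is a finite sequence of states over a common domain in which every two consecutive states form a transition. The problem is safe if there is no trace $s_0,\dots,s_k$ with $s_0\models\iota$ and $s_k\models\beta$. Throughout, $A\Rightarrow B$ means that the implication $A\to B$ is valid. Proofs: the statements of a proof system are safety problems. A proof of $\Pi$ in a system is a finite tree whose nodes are safety problems, whose root is $\Pi$, and in which each node together with its children is an instance of one of the system's inference rules, with side conditions valid. The system $\mathbf{FI}$ has the following rules, where $\varphi$ ranges over closed formulas over $\Sigma$: (Ind): no premises; conclusion $(\iota,\tau,\neg\varphi)$; side conditions $\iota\Rightarrow\varphi$ and $\varphi\wedge\tau\Rightarrow\varphi'$. (Cons): premise $(\iota,\tau,\neg\varphi)$; conclusion $(\iota,\tau,\beta)$;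 side condition $\varphi\Rightarrow\neg\beta$. (Inc): premises $(\iota,\tau,\neg\varphi)$ and $(\iota\wedge\varphi,\ \tau\wedge\varphi\wedge\varphi',\ \beta\wedge\varphi)$; conclusion $(\iota,\tau,\beta)$. *)

theory Defs
  imports Main
begin

text \<open>Function symbols (constants are 0-ary function symbols) have type 'f,
  relation symbols have type 'r.  Variables are natural numbers.\<close>

datatype 'f trm = Var nat | App 'f "'f trm list"

datatype ('f, 'r) fm =
    FF
  | Eq "'f trm" "'f trm"
  | Rel 'r "'f trm list"
  | Neg "('f, 'r) fm"
  | Conj "('f, 'r) fm" "('f, 'r) fm"
  | Ex nat "('f, 'r) fm"

definition Imp :: "('f, 'r) fm \<Rightarrow> ('f, 'r) fm \<Rightarrow> ('f, 'r) fm" where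
  "Imp A B = Neg (Conj A (Neg B))"

fun fvt :: "'f trm \<Rightarrow> nat set" where
  "fvt (Var x) = {x}"
| "fvt (App f ts) = (\<Union>t\<in>set ts. fvt t)"

fun fv :: "('f, 'r) fm \<Rightarrow> nat set" where
  "fv FF = {}"
| "fv (Eq s t) = fvt s \<union> fvt t"
| "fv (Rel r ts) = (\<Union>t\<in>set ts. fvt t)"
| "fv (Neg A) = fv A"
| "fv (Conj A B) = fv A \<union> fv B"
| "fv (Ex x A) = fv A - {x}"

definition closed :: "('f, 'r) fm \<Rightarrow> bool" where
  "closed A \<longleftrightarrow> fv A = {}"

record ('f, 'r, 'a) struct =
  Fn :: "'f \<Rightarrow> 'a list \<Rightarrow> 'a"
  Rl :: "'r \<Rightarrow> 'a list \<Rightarrow> bool"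

fun evalt :: "('f, 'r, 'a) struct \<Rightarrow> (nat \<Rightarrow> 'a) \<Rightarrow> 'f trm \<Rightarrow> 'a" where
  "evalt S e (Var x) = e x"
| "evalt S e (App f ts) = Fn S f (map (evalt S e) ts)"

fun sat :: "('f, 'r, 'a) struct \<Rightarrow> (nat \<Rightarrow> 'a) \<Rightarrow> ('f, 'r) fm \<Rightarrow> bool" where
  "sat S e FF = False"
| "sat S e (Eq s t) = (evalt S e s = evalt S e t)"
| "sat S e (Rel r ts) = Rl S r (map (evalt S e) ts)"
| "sat S e (Neg A) = (\<not> sat S e A)"
| "sat S e (Conj A B) = (sat S e A \<and> sat S e B)"
| "sat S e (Ex x A) = (\<exists>a. sat S (e(x := a)) A)"

definition holds :: "('f, 'r, 'a) struct \<Rightarrow> ('f, 'r) fm \<Rightarrow> bool" where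
  "holds S A \<longleftrightarrow> (\<forall>e. sat S e A)"

definition valid :: "'a itself \<Rightarrow> ('f, 'r) fm \<Rightarrow> bool" where
  "valid T A \<longleftrightarrow> (\<forall>(S :: ('f, 'r, 'a) struct). holds S A)"

definition entails :: "'a itself \<Rightarrow> ('f, 'r) fm \<Rightarrow> ('f, 'r) fm \<Rightarrow> bool" where
  "entails T A B \<longleftrightarrow> valid T (Imp A B)"

text \<open>Symbol (s, False) is s in \<Sigma>, symbol (s, True) is its primed copy s'.\<close>

definition unp :: "('f, 'r) fm \<Rightarrow> ('f \<times> bool, 'r \<times> bool) fm" where
  "unp A = map_fm (\<lambda>f. (f, False)) (\<lambda>r. (r, False)) A"

definition prm :: "('f, 'r) fm \<Rightarrow> ('f \<times> bool, 'r \<times> bool) fm" where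
  "prm A = map_fm (\<lambda>f. (f, True)) (\<lambda>r. (r, True)) A"

definition joint :: "('f, 'r, 'a) struct \<Rightarrow> ('f, 'r, 'a) struct \<Rightarrow> ('f \<times> bool, 'r \<times> bool, 'a) struct" where
  "joint s t = \<lparr> Fn = (\<lambda>(f, b). if b then Fn t f else Fn s f),
                Rl = (\<lambda>(r, b). if b then Rl t r else Rl s r) \<rparr>"

type_synonym ('f, 'r) problem =
  "('f, 'r) fm \<times> ('f \<times> bool, 'r \<times> bool) fm \<times> ('f, 'r) fm"

definition safety_problem :: "('f, 'r) problem \<Rightarrow> bool" where
  "safety_problem P \<longleftrightarrow> (case P of (\<iota>, \<tau>, \<beta>) \<Rightarrow> closed \<iota> \<and> closed \<tau> \<and> closed \<beta>)"

definition is_transition :: "('f \<times> bool, 'r \<times> bool) fm \<Rightarrow> ('f, 'r, 'a) struct \<Rightarrow> ('f, 'r, 'a) struct \<Rightarrow> bool" where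
  "is_transition \<tau> s t \<longleftrightarrow> holds (joint s t) \<tau>"

definition is_trace :: "('f \<times> bool, 'r \<times> bool) fm \<Rightarrow> ('f, 'r, 'a) struct list \<Rightarrow> bool" where
  "is_trace \<tau> ss \<longleftrightarrow> ss \<noteq> [] \<and> (\<forall>i. Suc i < length ss \<longrightarrow> is_transition \<tau> (ss ! i) (ss ! Suc i))"

definition safe :: "'a itself \<Rightarrow> ('f, 'r) problem \<Rightarrow> bool" where
  "safe T P \<longleftrightarrow> (case P of (\<iota>, \<tau>, \<beta>) \<Rightarrow>
     \<not> (\<exists>ss :: ('f, 'r, 'a) struct list. is_trace \<tau> ss \<and> holds (hd ss) \<iota> \<and> holds (last ss) \<beta>))"

inductive FI :: "'a itself \<Rightarrow> ('f, 'r) problem \<Rightarrow> bool" for T :: "'a itself" where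
  Ind: "\<lbrakk> closed \<phi>; entails T \<iota> \<phi>; entails T (Conj (unp \<phi>) \<tau>) (prm \<phi>) \<rbrakk>
        \<Longrightarrow> FI T (\<iota>, \<tau>, Neg \<phi>)"
| Cons: "\<lbrakk> closed \<phi>; FI T (\<iota>, \<tau>, Neg \<phi>); entails T \<phi> (Neg \<beta>) \<rbrakk>
        \<Longrightarrow> FI T (\<iota>, \<tau>, \<beta>)"
| Inc: "\<lbrakk> closed \<phi>; FI T (\<iota>, \<tau>, Neg \<phi>);
          FI T (Conj \<iota> \<phi>, Conj (Conj \<tau> (unp \<phi>)) (prm \<phi>), Conj \<beta> \<phi>) \<rbrakk>
        \<Longrightarrow> FI T (\<iota>, \<tau>, \<beta>)"

end

theory Submission
  imports Defs
begin

lemma evalt_cong: "(\<forall>x\<in>fvt t. e x = e' x) \<Longrightarrow> evalt S e t = evalt S e' t"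
  by (induction t) (auto intro!: arg_cong[where f="Fn S _"])

lemma sat_cong: "(\<forall>x\<in>fv A. e x = e' x) \<Longrightarrow> sat S e A = sat S e' A"
proof (induction A arbitrary: e e')
  case (Eq s t) then show ?case using evalt_cong[of s e e' S] evalt_cong[of t e e' S] by simp
next
  case (Rel r ts)
  have "map (evalt S e) ts = map (evalt S e') ts"
    using Rel by (intro map_cong) (auto intro!: evalt_cong)
  then show ?case by (simp only: sat.simps)
next
  case (Conj A B)
  have "sat S e A = sat S e' A" using Conj.prems by (intro Conj.IH(1)) auto
  moreover have "sat S e B = sat S e' B" using Conj.prems by (intro Conj.IH(2)) auto
  ultimately show ?case by simp
next
  case (Ex x A)
  have "\<And>a. sat S (e(x:=a)) A = sat S (e'(x:=a)) A"
    using Ex.IH Ex.prems by auto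
  then show ?case by simp
qed auto

lemma holds_closed: "closed A \<Longrightarrow> holds S A = sat S e A"
  unfolding holds_def closed_def using sat_cong[of A] by auto

lemma joint_simps[simp]: "Fn (joint s t) (f, False) = Fn s f" "Fn (joint s t) (f, True) = Fn t f"
  "Rl (joint s t) (r, False) = Rl s r" "Rl (joint s t) (r, True) = Rl t r"
  by (auto simp: joint_def)

lemma evalt_unp: "evalt (joint s t) e (map_trm (\<lambda>f. (f, False)) x) = evalt s e x"
  by (induction x) (auto simp: comp_def intro!: arg_cong[where f="Fn s _"])

lemma evalt_prm: "evalt (joint s t) e (map_trm (\<lambda>f. (f, True)) x) = evalt t e x"
  by (induction x) (auto simp: comp_def intro!: arg_cong[where f="Fn t _"])

lemma sat_unp: "sat (joint s t) e (unp A) = sat s e A"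
  unfolding unp_def
  by (induction A arbitrary: e) (auto simp: evalt_unp comp_def)

lemma sat_prm: "sat (joint s t) e (prm A) = sat t e A"
  unfolding prm_def
  by (induction A arbitrary: e) (auto simp: evalt_prm comp_def)

lemma fvt_map: "fvt (map_trm f t) = fvt t"
  by (induction t) auto

lemma fv_map: "fv (map_fm f g A) = fv A"
  by (induction A) (auto simp: fvt_map)

lemma entailsD:
  fixes T :: "'a itself" and S :: "('f,'r,'a) struct"
  assumes "entails T A B" "sat S e A" shows "sat S e B"
  using assms unfolding entails_def valid_def holds_def Imp_def by auto

definition good :: "'a itself \<Rightarrow> ('f, 'r) problem \<Rightarrow> bool" where
  "good T P \<longleftrightarrow> (case P of (\<iota>, \<tau>, \<beta>) \<Rightarrow> closed \<iota> \<longrightarrow> closed \<tau> \<longrightarrow> closed \<beta> \<longrightarrow>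
     (\<forall>ss :: ('f, 'r, 'a) struct list. is_trace \<tau> ss \<and> holds (hd ss) \<iota> \<longrightarrow>
        (\<forall>i<length ss. \<not> holds (ss ! i) \<beta>)))"

lemma main:
  fixes T :: "'a itself" and P :: "('f, 'r) problem"
  assumes "FI T P"
  shows "good T P"
  using assms
proof (induction P rule: FI.induct)
  case (Ind \<phi> \<iota> \<tau>)
  show ?case unfolding good_def prod.case
  proof (intro allI impI)
    fix ss :: "('f, 'r, 'a) struct list" and i
    assume ci: "closed \<iota>" and ct: "closed \<tau>" and cb: "closed (Neg \<phi>)"
    assume tr: "is_trace \<tau> ss \<and> holds (hd ss) \<iota>" and i: "i < length ss"
    have "holds (ss ! i) \<phi>" using i
    proof (induction i)
      case 0
      have "ss \<noteq> []" using tr is_trace_def by blast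
      then have "hd ss = ss ! 0" by (simp add: hd_conv_nth)
      then show ?case using tr Ind(2) entailsD[of T \<iota> \<phi> "ss!0"]
        unfolding holds_def by metis
    next
      case (Suc i)
      have tt: "holds (joint (ss!i) (ss!Suc i)) \<tau>"
        using tr Suc.prems unfolding is_trace_def is_transition_def by blast
      have hi: "holds (ss!i) \<phi>" using Suc by simp
      show ?case unfolding holds_def
      proof
        fix e
        have "sat (joint (ss!i) (ss!Suc i)) e (Conj (unp \<phi>) \<tau>)"
          using tt hi by (simp add: sat_unp holds_def)
        then have "sat (joint (ss!i) (ss!Suc i)) e (prm \<phi>)"
          using entailsD[OF Ind(3)] by blast
        then show "sat (ss ! Suc i) e \<phi>" by (simp add: sat_prm)
      qed
    qed
    then show "\<not> holds (ss ! i) (Neg \<phi>)" by (simp add: holds_def)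
  qed
next
  case (Cons \<phi> \<iota> \<tau> \<beta>)
  have cn: "closed (Neg \<phi>)" using Cons(1) by (simp add: closed_def)
  show ?case unfolding good_def prod.case
  proof (intro allI impI)
    fix ss :: "('f, 'r, 'a) struct list" and i
    assume ci: "closed \<iota>" and ct: "closed \<tau>" and cb: "closed \<beta>"
    assume tr: "is_trace \<tau> ss \<and> holds (hd ss) \<iota>" and i: "i < length ss"
    have "\<not> holds (ss ! i) (Neg \<phi>)" using Cons.IH[unfolded good_def prod.case] ct ci cn tr i by simp
    then obtain e where "sat (ss!i) e \<phi>" by (auto simp: holds_def)
    then have "sat (ss!i) e (Neg \<beta>)" using entailsD[OF Cons(3)] by blast
    then show "\<not> holds (ss ! i) \<beta>" unfolding holds_def by auto
  qed
next
  case (Inc \<phi> \<iota> \<tau> \<beta>)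
  have cn: "closed (Neg \<phi>)" using Inc(1) by (simp add: closed_def)
  show ?case unfolding good_def prod.case
  proof (intro allI impI)
    fix ss :: "('f, 'r, 'a) struct list" and i
    assume ci: "closed \<iota>" and ct: "closed \<tau>" and cb: "closed \<beta>"
    assume tr: "is_trace \<tau> ss \<and> holds (hd ss) \<iota>" and i: "i < length ss"
    have c2: "closed (Conj \<iota> \<phi>)" "closed (Conj (Conj \<tau> (unp \<phi>)) (prm \<phi>))" "closed (Conj \<beta> \<phi>)"
      using Inc ci ct cb by (auto simp: closed_def unp_def prm_def fv_map)
    have allphi: "\<And>j. j < length ss \<Longrightarrow> holds (ss ! j) \<phi>"
    proof -
      fix j assume "j < length ss"
      then have "\<not> holds (ss ! j) (Neg \<phi>)" using Inc.IH(1)[unfolded good_def prod.case] ct ci cn tr by simp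
      then obtain e where "sat (ss!j) e \<phi>" by (auto simp: holds_def)
      then show "holds (ss ! j) \<phi>" using holds_closed[OF Inc(1)] by blast
    qed
    have ne: "ss \<noteq> []" using tr is_trace_def by blast
    have tr2: "is_trace (Conj (Conj \<tau> (unp \<phi>)) (prm \<phi>)) ss"
      unfolding is_trace_def is_transition_def
    proof (intro conjI ne allI impI)
      fix k assume k: "Suc k < length ss"
      have "holds (joint (ss!k) (ss!Suc k)) \<tau>"
        using tr k unfolding is_trace_def is_transition_def by blast
      moreover have "holds (ss!k) \<phi>" "holds (ss!Suc k) \<phi>" using allphi k by auto
      ultimately show "holds (joint (ss ! k) (ss ! Suc k)) (Conj (Conj \<tau> (unp \<phi>)) (prm \<phi>))"
        by (simp add: holds_def sat_unp sat_prm)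
    qed
    have "hd ss = ss ! 0" using ne by (simp add: hd_conv_nth)
    then have "holds (hd ss) (Conj \<iota> \<phi>)" using tr allphi[of 0] ne by (simp add: holds_def)
    then have "\<not> holds (ss ! i) (Conj \<beta> \<phi>)"
      using Inc.IH(2)[unfolded good_def prod.case] c2 tr2 i by blast
    then show "\<not> holds (ss ! i) \<beta>" using allphi[OF i] by (simp add: holds_def)
  qed
qed

theorem theorem4p4:
  fixes P :: "('f, 'r) problem" and T :: "'a itself"
  assumes "safety_problem P"
    and "FI T P"
  shows "safe T P"
proof -
  obtain \<iota> \<tau> \<beta> where P: "P = (\<iota>, \<tau>, \<beta>)" by (cases P) auto
  have c: "closed \<iota>" "closed \<tau>" "closed \<beta>" using assms(1) P by (auto simp: safety_problem_def)
  have ne: "\<And>ss. is_trace \<tau> ss \<Longrightarrow> last ss = ss ! (length ss - 1) \<and> length ss - 1 < length ss"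
    by (simp add: is_trace_def last_conv_nth)
  show ?thesis unfolding safe_def P
    using main[OF assms(2), unfolded good_def P prod.case] c ne by fastforce
qed

end
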